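(* Let $A_1,A_2\in\mathbb{R}^{2\times2}$ be Hurwitz matrices. If $\det([A_1,A_2])\ge0$, where $[A_1,A_2]=A_1A_2-A_2A_1$, then the switched system $\dot x=u(t)A_1x+(1-u(t))A_2x$, $u:[0,\infty)\to\{0,1\}$ measurable, admits a common quadratic Lyapunov function, i.e. there is a symmetric positive definite $P$ such that $A_1^TP+PA_1$ and $A_2^TP+PA_2$ are both negative definite.
   Context: A real $2\times2$ matrix is Hurwitz if all its eigenvalues have negative real part. *)

theory Defs
  imports "HOL-Analysis.Analysis"
begin

definition cmat :: "real^'n^'n \<Rightarrow> complex^'n^'n" where
  "cmat A = (\<chi> i j. complex_of_real (A $ i $ j))"

definition is_eigenvalue :: "real^'n^'n \<Rightarrow> complex \<Rightarrow> bool" where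
  "is_eigenvalue A c \<longleftrightarrow> (\<exists>v::complex^'n. v \<noteq> 0 \<and> cmat A *v v = c *s v)"

definition hurwitz :: "real^'n^'n \<Rightarrow> bool" where
  "hurwitz A \<longleftrightarrow> (\<forall>c. is_eigenvalue A c \<longrightarrow> Re c < 0)"

definition pos_def :: "real^'n^'n \<Rightarrow> bool" where
  "pos_def P \<longleftrightarrow> (\<forall>x. x \<noteq> 0 \<longrightarrow> x \<bullet> (P *v x) > 0)"

definition neg_def :: "real^'n^'n \<Rightarrow> bool" where
  "neg_def P \<longleftrightarrow> (\<forall>x. x \<noteq> 0 \<longrightarrow> x \<bullet> (P *v x) < 0)"

end

theory Submission
  imports Defs
begin


lemma ker_nonzero:
  fixes M :: "complex^'n^'n"
  assumes "det M = 0"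
  shows "\<exists>v. v \<noteq> 0 \<and> M *v v = 0"
proof -
  have "\<not> inj ((*v) M)"
    using det_nz_iff_inj_gen[of "(*v) M"] assms by simp
  then obtain x y where "x \<noteq> y" "M *v x = M *v y" unfolding inj_def by auto
  then show ?thesis
    by (intro exI[of _ "x - y"]) (simp add: matrix_vector_mult_diff_distrib)
qed

lemma eig_of_root:
  fixes A :: "real^2^2" and l :: complex
  assumes "l^2 - (A$1$1 + A$2$2) * l + (A$1$1*A$2$2 - A$1$2*A$2$1) = 0"
  shows "is_eigenvalue A l"
proof -
  let ?M = "cmat A - mat l"
  have "det ?M = 0"
    using assms unfolding det_2 cmat_def
    by (simp add: mat_def algebra_simps power2_eq_square)
  then obtain v where v: "v \<noteq> 0" "?M *v v = 0" using ker_nonzero by blast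
  have "cmat A *v v = l *s v"
    using v(2) by (simp add: matrix_vector_mult_diff_rdistrib vec_eq_iff matrix_vector_mult_def mat_def sum_2 forall_2 algebra_simps)
  then show ?thesis unfolding is_eigenvalue_def using v(1) by blast
qed



lemma hurwitz2:
  fixes A :: "real^2^2"
  assumes "hurwitz A"
  shows "A$1$1 + A$2$2 < 0 \<and> A$1$1*A$2$2 - A$1$2*A$2$1 > 0"
proof -
  define t where "t = A$1$1 + A$2$2"
  define D where "D = A$1$1*A$2$2 - A$1$2*A$2$1"
  define E where "E = t^2 - 4*D"
  show ?thesis
  proof (cases "E \<ge> 0")
    case True
    define s where "s = sqrt E"
    have s2: "s^2 = E" "s \<ge> 0" using True by (auto simp: s_def)
    define l where "l = complex_of_real ((t+s)/2)"
    have "((t+s)/2)^2 - t*((t+s)/2) + D = 0"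
      using s2 by (simp add: E_def power2_eq_square field_simps)
    then have "l^2 - t*l + D = 0" unfolding l_def
      by (metis (mono_tags) of_real_add of_real_diff of_real_mult of_real_power of_real_eq_0_iff)
    then have "is_eigenvalue A l" using eig_of_root[of l A] by (simp add: t_def D_def)
    then have "(t+s)/2 < 0" using assms unfolding hurwitz_def l_def by auto
    then have "t < 0" "s < -t" using s2 by auto
    then have "s^2 < (-t)^2" using s2 by (intro power_strict_mono) auto
    then have "s^2 < t^2" by simp
    then show ?thesis using \<open>t<0\<close> s2 by (simp add: t_def D_def E_def)
  next
    case False
    define s where "s = sqrt (-E)"
    have s2: "s^2 = -E" using False by (auto simp: s_def)
    define l where "l = Complex (t/2) (s/2)"
    have "l^2 - t*l + D = 0" unfolding l_def
      using s2 by (simp add: complex_eq_iff power2_eq_square E_def field_simps)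
    then have "is_eigenvalue A l" using eig_of_root[of l A] by (simp add: t_def D_def)
    then have "t/2 < 0" using assms unfolding hurwitz_def l_def by auto
    moreover have "D > 0" using False unfolding E_def
      by (smt (verit) zero_le_power2)
    ultimately show ?thesis by (simp add: t_def D_def)
  qed
qed



lemma quad_neg:
  fixes m11 m12 m22 x y :: real
  assumes "m11 < 0" "m11*m22 - m12^2 > 0" "x \<noteq> 0 \<or> y \<noteq> 0"
  shows "m11*x^2 + 2*m12*x*y + m22*y^2 < 0"
proof -
  have e: "m11*(m11*x^2 + 2*m12*x*y + m22*y^2) = (m11*x + m12*y)^2 + (m11*m22 - m12^2)*y^2"
    by (simp add: power2_eq_square algebra_simps)
  have "(m11*x + m12*y)^2 + (m11*m22 - m12^2)*y^2 > 0"
  proof (cases "y = 0")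
    case True
    then have "x \<noteq> 0" using assms by auto
    then show ?thesis using True assms by simp
  next
    case False
    then have "(m11*m22 - m12^2)*y^2 > 0" using assms by simp
    moreover have "(m11*x + m12*y)^2 \<ge> 0" by simp
    ultimately show ?thesis by linarith
  qed
  then have "m11*(m11*x^2 + 2*m12*x*y + m22*y^2) > 0" using e by simp
  then show ?thesis using assms(1) by (simp add: zero_less_mult_iff)
qed

lemma lyap_real:
  fixes a b c d p q r :: real
  assumes p: "p > 0" and pr: "p*r > q^2" and tr: "a + d < 0"
    and f: "(p*b - r*c + q*(d-a))^2 < 4*(a*d-b*c)*(p*r-q^2)"
  shows "p*a+q*c < 0 \<and> 4*(p*a+q*c)*(q*b+r*d) - (p*b+r*c+q*(a+d))^2 > 0"
proof -
  define m1 where "m1 = p*a+q*c"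
  define m2 where "m2 = q*b+r*d"
  define m where "m = p*b+r*c+q*(a+d)"
  have id: "4*m1*m2 - m^2 = 4*(a*d-b*c)*(p*r-q^2) - (p*b - r*c + q*(d-a))^2"
    unfolding m1_def m2_def m_def by (simp add: power2_eq_square algebra_simps)
  have dm: "4*m1*m2 - m^2 > 0" using id f by simp
  have "p*r > 0" using pr by (smt (verit) zero_le_power2)
  then have r: "r > 0" using p by (simp add: zero_less_mult_iff)
  have lin: "r*m1 + p*m2 - q*m = (p*r-q^2)*(a+d)"
    unfolding m1_def m2_def m_def by (simp add: power2_eq_square algebra_simps)
  have "m1 < 0"
  proof (rule ccontr)
    assume "\<not> m1 < 0"
    then have m10: "m1 \<ge> 0" by simp
    have mm: "4*m1*m2 > m^2" using dm by simp
    moreover have "m^2 \<ge> 0" by simp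
    ultimately have "m1*m2 > 0" by linarith
    then have m1p: "m1 > 0" and m2p: "m2 > 0" using m10
      by (auto simp: zero_less_mult_iff)
    have "(p*r-q^2)*(a+d) < 0" using tr pr by (intro mult_pos_neg) auto
    then have "r*m1 + p*m2 < q*m" using lin by linarith
    moreover have "r*m1 + p*m2 > 0" using r p m1p m2p by (simp add: add_pos_pos)
    ultimately have lt: "(r*m1 + p*m2)^2 < (q*m)^2"
      by (intro power_strict_mono) auto
    have "(r*m1 + p*m2)^2 = (r*m1 - p*m2)^2 + 4*(p*r)*(m1*m2)"
      by (simp add: power2_eq_square algebra_simps)
    moreover have "(r*m1 - p*m2)^2 \<ge> 0" by simp
    ultimately have ge: "(r*m1 + p*m2)^2 \<ge> (p*r)*(4*m1*m2)" by linarith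
    have "(p*r)*(4*m1*m2) > q^2 * m^2"
    proof -
      have "(p*r)*(4*m1*m2) > q^2*(4*m1*m2)" using pr m1p m2p by simp
      moreover have "q^2*(4*m1*m2) \<ge> q^2*m^2" using mm by (simp add: mult_left_mono)
      ultimately show ?thesis by simp
    qed
    then show False using lt ge by (simp add: power_mult_distrib)
  qed
  then show ?thesis using dm unfolding m1_def m2_def m_def by simp
qed



definition ff :: "real \<Rightarrow> real \<Rightarrow> real \<Rightarrow> real \<Rightarrow> real \<Rightarrow> real \<Rightarrow> real \<Rightarrow> real" where
  "ff a b c d p q r = p*b - r*c + q*(d-a)"

definition good :: "real \<Rightarrow> real \<Rightarrow> real \<Rightarrow> real \<Rightarrow> real \<Rightarrow> real \<Rightarrow> real \<Rightarrow> bool" where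
  "good a b c d p q r \<longleftrightarrow> (ff a b c d p q r)^2 < 4*(a*d-b*c)*(p*r-q^2)"

lemma eps_one:
  fixes e g D T d0 :: real
  assumes "0 < e" "e \<le> D*T/(g^2+1)" "D > 0" "T > 0" "d0 \<ge> 0"
  shows "(e*g)^2 < 4*D*(d0 + e*T + e^2)"
proof -
  have gp: "g^2+1 > 0" by (simp add: add_nonneg_pos)
  have "e*(g^2+1) \<le> D*T" using assms(2) gp by (simp add: le_divide_eq)
  then have "e*g^2 < D*T" using assms(1) by (simp add: algebra_simps)
  then have "e*(e*g^2) < e*(D*T)" using assms(1) by simp
  moreover have "e*(D*T) \<le> 4*D*(d0 + e*T + e^2)"
  proof -
    have "0 \<le> 4*D*d0 + 4*D*e^2 + 3*(e*(D*T))" using assms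
      by (simp add: add_nonneg_nonneg)
    then show ?thesis by (simp add: algebra_simps)
  qed
  ultimately show ?thesis by (simp add: power2_eq_square algebra_simps)
qed

lemma eps_lemma:
  fixes a1 b1 c1 d1 a2 b2 c2 d2 p0 q0 r0 :: real
  assumes "p0 \<ge> 0" "r0 \<ge> 0" "p0*r0 \<ge> q0^2" "p0 + r0 > 0"
    "ff a1 b1 c1 d1 p0 q0 r0 = 0" "ff a2 b2 c2 d2 p0 q0 r0 = 0"
    "a1*d1-b1*c1 > 0" "a2*d2-b2*c2 > 0"
  shows "\<exists>p q r. p > 0 \<and> p*r > q^2 \<and> good a1 b1 c1 d1 p q r \<and> good a2 b2 c2 d2 p q r"
proof -
  define T where "T = p0 + r0"
  define D1 where "D1 = a1*d1-b1*c1"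
  define D2 where "D2 = a2*d2-b2*c2"
  define e where "e = min (D1*T/((b1-c1)^2+1)) (D2*T/((b2-c2)^2+1))"
  have T: "T > 0" using assms by (simp add: T_def)
  have gp1: "(b1-c1)^2+1 > 0" "(b2-c2)^2+1 > 0" by (simp_all add: add_nonneg_pos)
  have e0: "e > 0" using assms T gp1 unfolding e_def D1_def D2_def
    by (simp add: divide_pos_pos)
  have d0: "p0*r0 - q0^2 \<ge> 0" using assms by simp
  have det: "(p0+e)*(r0+e) - q0^2 = (p0*r0-q0^2) + e*T + e^2"
    by (simp add: T_def power2_eq_square algebra_simps)
  have f1: "ff a1 b1 c1 d1 (p0+e) q0 (r0+e) = e*(b1-c1)"
    using assms(5) unfolding ff_def by (simp add: algebra_simps)
  have f2: "ff a2 b2 c2 d2 (p0+e) q0 (r0+e) = e*(b2-c2)"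
    using assms(6) unfolding ff_def by (simp add: algebra_simps)
  have g1: "good a1 b1 c1 d1 (p0+e) q0 (r0+e)"
    unfolding good_def f1 det
    using eps_one[OF e0 _ _ T d0, of D1 "b1-c1"] assms(7) unfolding D1_def e_def by simp
  have g2: "good a2 b2 c2 d2 (p0+e) q0 (r0+e)"
    unfolding good_def f2 det
    using eps_one[OF e0 _ _ T d0, of D2 "b2-c2"] assms(8) unfolding D2_def e_def by simp
  have "(p0+e)*(r0+e) - q0^2 > 0" unfolding det using d0 T e0
    by (simp add: add_nonneg_pos)
  then show ?thesis using g1 g2 assms(1) e0
    by (intro exI[of _ "p0+e"] exI[of _ q0] exI[of _ "r0+e"]) auto
qed



lemma noncomm_case:
  fixes a1 b1 c1 d1 a2 b2 c2 d2 :: real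
  defines "C11 \<equiv> b1*c2 - b2*c1"
    and "C12 \<equiv> a1*b2 + b1*d2 - a2*b1 - b2*d1"
    and "C21 \<equiv> c1*a2 + d1*c2 - c2*a1 - d2*c1"
  assumes "a1*d1-b1*c1 > 0" "a2*d2-b2*c2 > 0"
    and dC: "C11*(-C11) - C12*C21 \<ge> 0"
    and nz: "C11 \<noteq> 0 \<or> C12 \<noteq> 0 \<or> C21 \<noteq> 0"
  shows "\<exists>p q r. p > 0 \<and> p*r > q^2 \<and> good a1 b1 c1 d1 p q r \<and> good a2 b2 c2 d2 p q r"
proof -
  define s :: real where "s = (if C21 - C12 \<ge> 0 then 1 else -1)"
  define p0 where "p0 = s*C21"
  define q0 where "q0 = -s*C11"
  define r0 where "r0 = -s*C12"
  have s2: "s * s = 1" by (simp add: s_def)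
  have tr: "p0 + r0 \<ge> 0" by (simp add: p0_def r0_def s_def algebra_simps)
  have det: "p0*r0 - q0^2 = C11*(-C11) - C12*C21"
    unfolding p0_def q0_def r0_def
    by (simp add: power2_eq_square algebra_simps s2[simplified mult.commute] mult.assoc[symmetric])
  have dpos: "p0*r0 \<ge> q0^2" using det dC by simp
  have trpos: "p0 + r0 > 0"
  proof (rule ccontr)
    assume "\<not> p0 + r0 > 0"
    then have "r0 = -p0" using tr by simp
    then have "-(p0^2) - q0^2 \<ge> 0" using dpos by (simp add: power2_eq_square)
    then have "p0 = 0" "q0 = 0"
      by (smt (verit) zero_le_power2 power2_eq_square mult_eq_0_iff zero_eq_power2)+
    then show False using \<open>r0 = -p0\<close> nz s2
      by (auto simp: p0_def q0_def r0_def)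
  qed
  have pr0: "p0 \<ge> 0" "r0 \<ge> 0"
  proof -
    have "q0^2 \<ge> 0" by simp
    then have "p0*r0 \<ge> 0" using dpos by linarith
    then show "p0 \<ge> 0" "r0 \<ge> 0" using trpos
      by (auto simp: zero_le_mult_iff)
  qed
  have f1: "ff a1 b1 c1 d1 p0 q0 r0 = 0"
    unfolding ff_def p0_def q0_def r0_def C11_def C12_def C21_def by (simp add: algebra_simps)
  have f2: "ff a2 b2 c2 d2 p0 q0 r0 = 0"
    unfolding ff_def p0_def q0_def r0_def C11_def C12_def C21_def by (simp add: algebra_simps)
  show ?thesis
    using eps_lemma[OF pr0(1) pr0(2) dpos trpos f1 f2] assms(4,5) by simp
qed



lemma comm_case:
  fixes a1 b1 c1 d1 a2 b2 c2 d2 :: real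
  assumes C11: "b1*c2 - b2*c1 = 0"
    and C12: "a1*b2 + b1*d2 - a2*b1 - b2*d1 = 0"
    and C21: "c1*a2 + d1*c2 - c2*a1 - d2*c1 = 0"
    and u1: "b1 \<noteq> 0 \<or> c1 \<noteq> 0 \<or> d1 - a1 \<noteq> 0"
    and t1: "a1 + d1 < 0" and t2: "a2 + d2 < 0"
    and D1: "a1*d1-b1*c1 > 0" and D2: "a2*d2-b2*c2 > 0"
  shows "\<exists>p q r. p > 0 \<and> p*r > q^2 \<and> good a1 b1 c1 d1 p q r \<and> good a2 b2 c2 d2 p q r"
proof -
  define n where "n = b1^2 + c1^2 + (d1-a1)^2"
  define k where "k = b1*b2 + c1*c2 + (d1-a1)*(d2-a2)"
  have n0: "n > 0" using u1 unfolding n_def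
    by (auto simp: add_pos_nonneg add_nonneg_pos)
  have i1: "n*b2 - k*b1 = -(c1*(b1*c2 - b2*c1) + (d1-a1)*(a1*b2 + b1*d2 - a2*b1 - b2*d1))"
    unfolding n_def k_def by (simp add: power2_eq_square algebra_simps)
  have i2: "n*c2 - k*c1 = (d1-a1)*(c1*a2 + d1*c2 - c2*a1 - d2*c1) + b1*(b1*c2 - b2*c1)"
    unfolding n_def k_def by (simp add: power2_eq_square algebra_simps)
  have i3: "n*(d2-a2) - k*(d1-a1) = b1*(a1*b2 + b1*d2 - a2*b1 - b2*d1) - c1*(c1*a2 + d1*c2 - c2*a1 - d2*c1)"
    unfolding n_def k_def by (simp add: power2_eq_square algebra_simps)
  have e1: "n*b2 = k*b1" using i1 unfolding C11 C12 by simp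
  have e2: "n*c2 = k*c1" using i2 unfolding C11 C21 by simp
  have e3: "n*(d2-a2) = k*(d1-a1)" using i3 unfolding C12 C21 by simp
  have fk: "n * ff a2 b2 c2 d2 p q r = k * ff a1 b1 c1 d1 p q r" for p q r
  proof -
    have "n * ff a2 b2 c2 d2 p q r = p*(n*b2) - r*(n*c2) + q*(n*(d2-a2))"
      unfolding ff_def by (simp add: algebra_simps)
    also have "\<dots> = k * ff a1 b1 c1 d1 p q r"
      unfolding e1 e2 e3 ff_def by (simp add: algebra_simps)
    finally show ?thesis .
  qed
  define K1 where "K1 = -4*b1*c1 - (a1-d1)^2"
  define K2 where "K2 = -4*b2*c2 - (a2-d2)^2"
  have K1lt: "K1 < 4*(a1*d1-b1*c1)"
  proof -
    have "4*(a1*d1-b1*c1) - K1 = (a1+d1)^2" unfolding K1_def by (simp add: power2_eq_square algebra_simps)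
    moreover have "(a1+d1)^2 > 0" using t1 by simp
    ultimately show ?thesis by linarith
  qed
  have K2lt: "K2 < 4*(a2*d2-b2*c2)"
  proof -
    have "4*(a2*d2-b2*c2) - K2 = (a2+d2)^2" unfolding K2_def by (simp add: power2_eq_square algebra_simps)
    moreover have "(a2+d2)^2 > 0" using t2 by simp
    ultimately show ?thesis by linarith
  qed
  show ?thesis
  proof (cases "K1 > 0")
    case True
    have c1: "c1 \<noteq> 0"
    proof
      assume "c1 = 0"
      then have "K1 = -((a1-d1)^2)" unfolding K1_def by simp
      moreover have "(a1-d1)^2 \<ge> 0" by simp
      ultimately show False using True by linarith
    qed
    define s :: real where "s = (if c1 < 0 then 1 else -1)"
    have s2: "s * s = 1" by (simp add: s_def)
    define p where "p = s*(-2*c1)"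
    define q where "q = s*(a1-d1)"
    define r where "r = s*(2*b1)"
    have pp: "p > 0" using c1 by (simp add: p_def s_def)
    have "p*r - q^2 = (s * s)*K1" unfolding p_def q_def r_def K1_def
      by (simp add: power2_eq_square algebra_simps)
    then have det: "p*r - q^2 = K1" unfolding s2 by simp
    have f1: "ff a1 b1 c1 d1 p q r = s*K1" unfolding ff_def p_def q_def r_def K1_def
      by (simp add: power2_eq_square algebra_simps)
    have g1: "good a1 b1 c1 d1 p q r"
    proof -
      have "(s*K1)^2 = (s * s)*(K1*K1)" by (simp add: power2_eq_square algebra_simps)
      also have "\<dots> = K1*K1" unfolding s2 by simp
      also have "\<dots> < 4*(a1*d1-b1*c1)*K1" by (rule mult_strict_right_mono[OF K1lt True])
      finally show ?thesis unfolding good_def f1 det .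
    qed
    have nk: "n^2*K2 = k^2*K1"
    proof -
      have "n^2*K2 = -4*(n*b2)*(n*c2) - (n*(d2-a2))^2" unfolding K2_def
        by (simp add: power2_eq_square algebra_simps)
      also have "\<dots> = -4*(k*b1)*(k*c1) - (k*(d1-a1))^2" unfolding e1 e2 e3 ..
      also have "\<dots> = k^2*K1" unfolding K1_def by (simp add: power2_eq_square algebra_simps)
      finally show ?thesis .
    qed
    have "n^2 * (ff a2 b2 c2 d2 p q r)^2 = (k * ff a1 b1 c1 d1 p q r)^2"
    proof -
      have "(n * ff a2 b2 c2 d2 p q r)^2 = (k * ff a1 b1 c1 d1 p q r)^2" using fk[of p q r] by simp
      then show ?thesis by (simp add: power_mult_distrib)
    qed
    also have "\<dots> = (s * s)*(k^2*K1*K1)" unfolding f1 by (simp add: power2_eq_square algebra_simps)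
    also have "\<dots> = (k^2*K1)*K1" unfolding s2 by simp
    also have "\<dots> = n^2*(K2*K1)" unfolding nk[symmetric] by (simp add: algebra_simps)
    finally have "n^2 * (ff a2 b2 c2 d2 p q r)^2 = n^2*(K2*K1)" .
    moreover have "n^2 \<noteq> 0" using n0 by simp
    ultimately have "(ff a2 b2 c2 d2 p q r)^2 = K2*K1" by (rule mult_left_cancel[THEN iffD1, rotated])
    also have "\<dots> < 4*(a2*d2-b2*c2)*K1" by (rule mult_strict_right_mono[OF K2lt True])
    finally have g2: "good a2 b2 c2 d2 p q r" unfolding good_def det .
    show ?thesis using pp det True g1 g2 by (intro exI[of _ p] exI[of _ q] exI[of _ r]) auto
  next
    case False
    define X where "X = -2*c1"
    define Y where "Y = a1-d1"
    define Z where "Z = 2*b1"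
    have XZ: "Y^2 - X*Z \<ge> 0" using False unfolding K1_def X_def Y_def Z_def
      by (simp add: algebra_simps power2_eq_square)
    obtain s t :: real where st: "s \<noteq> 0 \<or> t \<noteq> 0" "ff a1 b1 c1 d1 (s^2) (s*t) (t^2) = 0"
    proof (cases "c1 = 0")
      case True
      then show ?thesis using that[of 0 1] by (simp add: ff_def)
    next
      case False
      define t where "t = Y + sqrt (Y^2 - X*Z)"
      have tt: "(t - Y)^2 = Y^2 - X*Z" using XZ by (simp add: t_def)
      have "ff a1 b1 c1 d1 (X^2) (X*t) (t^2) = X*((t-Y)^2 - (Y^2 - X*Z))/2"
        unfolding ff_def X_def Y_def Z_def by (simp add: power2_eq_square algebra_simps)
      also have "\<dots> = 0" using tt by simp
      finally show ?thesis using that[of X t] False by (simp add: X_def)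
    qed
    have f2: "ff a2 b2 c2 d2 (s^2) (s*t) (t^2) = 0" using fk[of "s^2" "s*t" "t^2"] st(2) n0 by simp
    have tr: "s^2 + t^2 > 0" using st(1) by (auto simp: add_pos_nonneg add_nonneg_pos)
    show ?thesis
      by (rule eps_lemma[OF _ _ _ tr st(2) f2 D1 D2]) (auto simp: power_mult_distrib)
  qed
qed



lemma core:
  fixes a1 b1 c1 d1 a2 b2 c2 d2 :: real
  assumes t1: "a1 + d1 < 0" and t2: "a2 + d2 < 0"
    and D1: "a1*d1-b1*c1 > 0" and D2: "a2*d2-b2*c2 > 0"
    and dC: "(b1*c2 - b2*c1)*(-(b1*c2 - b2*c1)) - (a1*b2 + b1*d2 - a2*b1 - b2*d1)*(c1*a2 + d1*c2 - c2*a1 - d2*c1) \<ge> 0"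
  shows "\<exists>p q r. p > 0 \<and> p*r > q^2 \<and> good a1 b1 c1 d1 p q r \<and> good a2 b2 c2 d2 p q r"
proof (cases "b1*c2 - b2*c1 \<noteq> 0 \<or> a1*b2 + b1*d2 - a2*b1 - b2*d1 \<noteq> 0 \<or> c1*a2 + d1*c2 - c2*a1 - d2*c1 \<noteq> 0")
  case True
  then show ?thesis using noncomm_case[OF D1 D2 dC] by blast
next
  case False
  then have C: "b1*c2 - b2*c1 = 0" "a1*b2 + b1*d2 - a2*b1 - b2*d1 = 0" "c1*a2 + d1*c2 - c2*a1 - d2*c1 = 0"
    by auto
  show ?thesis
  proof (cases "b1 \<noteq> 0 \<or> c1 \<noteq> 0 \<or> d1 - a1 \<noteq> 0")
    case True
    then show ?thesis using comm_case[OF C True t1 t2 D1 D2] by blast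
  next
    case F1: False
    show ?thesis
    proof (cases "b2 \<noteq> 0 \<or> c2 \<noteq> 0 \<or> d2 - a2 \<noteq> 0")
      case True
      have C': "b2*c1 - b1*c2 = 0" "a2*b1 + b2*d1 - a1*b2 - b1*d2 = 0" "c2*a1 + d2*c1 - c1*a2 - d1*c2 = 0"
        using C by linarith+
      then show ?thesis using comm_case[OF C' True t2 t1 D2 D1] by blast
    next
      case False
      have "good a1 b1 c1 d1 1 0 1" "good a2 b2 c2 d2 1 0 1"
        using F1 False D1 D2 by (auto simp: good_def ff_def)
      then show ?thesis by (intro exI[of _ 1] exI[of _ 0] exI[of _ 1]) auto
    qed
  qed
qed

lemma quad2: "x \<bullet> ((M::real^2^2) *v x) = M$1$1*(x$1)^2 + (M$1$2+M$2$1)*x$1*x$2 + M$2$2*(x$2)^2"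
  by (simp add: inner_vec_def matrix_vector_mult_def sum_2 power2_eq_square algebra_simps)

lemma nz2: "(x::real^2) \<noteq> 0 \<longleftrightarrow> x$1 \<noteq> 0 \<or> x$2 \<noteq> 0"
  by (auto simp: vec_eq_iff forall_2)

lemma matrix_part:
  fixes A :: "real^2^2" and p q r :: real
  defines "P \<equiv> (\<chi> i j. if i = 1 \<and> j = 1 then p else if i = 2 \<and> j = 2 then r else q) :: real^2^2"
  assumes p: "p > 0" and pr: "p*r > q^2" and tr: "A$1$1 + A$2$2 < 0"
    and g: "good (A$1$1) (A$1$2) (A$2$1) (A$2$2) p q r"
  shows "transpose P = P \<and> pos_def P \<and> neg_def (transpose A ** P + P ** A)"
proof -
  have P: "P$1$1 = p" "P$1$2 = q" "P$2$1 = q" "P$2$2 = r" by (simp_all add: P_def)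
  have sym: "transpose P = P"
    by (simp add: vec_eq_iff forall_2 transpose_def P)
  have pd: "pos_def P"
    unfolding pos_def_def
  proof (intro allI impI)
    fix x :: "real^2" assume "x \<noteq> 0"
    then have "(-p)*(x$1)^2 + 2*(-q)*x$1*x$2 + (-r)*(x$2)^2 < 0"
      using pr p by (intro quad_neg) (auto simp: nz2)
    then show "x \<bullet> (P *v x) > 0" unfolding quad2 P by (simp add: algebra_simps)
  qed
  let ?a = "A$1$1" let ?b = "A$1$2" let ?c = "A$2$1" let ?d = "A$2$2"
  have L: "p*?a+q*?c < 0 \<and> 4*(p*?a+q*?c)*(q*?b+r*?d) - (p*?b+r*?c+q*(?a+?d))^2 > 0"
    using lyap_real[OF p pr tr] g unfolding good_def ff_def by simp
  let ?M = "transpose A ** P + P ** A"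
  have M: "?M$1$1 = 2*(p*?a+q*?c)" "?M$2$2 = 2*(q*?b+r*?d)"
     "?M$1$2 = p*?b+r*?c+q*(?a+?d)" "?M$2$1 = p*?b+r*?c+q*(?a+?d)"
    by (simp_all add: matrix_matrix_mult_def transpose_def sum_2 P algebra_simps)
  have nd: "neg_def ?M"
    unfolding neg_def_def
  proof (intro allI impI)
    fix x :: "real^2" assume "x \<noteq> 0"
    have "(2*(p*?a+q*?c))*(x$1)^2 + 2*(p*?b+r*?c+q*(?a+?d))*x$1*x$2 + (2*(q*?b+r*?d))*(x$2)^2 < 0"
      using L \<open>x \<noteq> 0\<close> by (intro quad_neg) (auto simp: nz2 power2_eq_square algebra_simps)
    then show "x \<bullet> (?M *v x) < 0" unfolding quad2 M by (simp add: algebra_simps)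
  qed
  show ?thesis using sym pd nd by simp
qed

theorem mainTheorem2:
  fixes A1 A2 :: "real^2^2"
  assumes "hurwitz A1" and "hurwitz A2"
    and "det (A1 ** A2 - A2 ** A1) \<ge> 0"
  shows "\<exists>P::real^2^2. transpose P = P \<and> pos_def P \<and>
           neg_def (transpose A1 ** P + P ** A1) \<and>
           neg_def (transpose A2 ** P + P ** A2)"
proof -
  have h1: "A1$1$1 + A1$2$2 < 0" "A1$1$1*A1$2$2 - A1$1$2*A1$2$1 > 0" using hurwitz2[OF assms(1)] by auto
  have h2: "A2$1$1 + A2$2$2 < 0" "A2$1$1*A2$2$2 - A2$1$2*A2$2$1 > 0" using hurwitz2[OF assms(2)] by auto
  have dC: "(A1$1$2*A2$2$1 - A2$1$2*A1$2$1)*(-(A1$1$2*A2$2$1 - A2$1$2*A1$2$1))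
      - (A1$1$1*A2$1$2 + A1$1$2*A2$2$2 - A2$1$1*A1$1$2 - A2$1$2*A1$2$2)
       *(A1$2$1*A2$1$1 + A1$2$2*A2$2$1 - A2$2$1*A1$1$1 - A2$2$2*A1$2$1) \<ge> 0"
    using assms(3) unfolding det_2
    by (simp add: matrix_matrix_mult_def sum_2 algebra_simps)
  obtain p q r where pqr: "p > 0" "p*r > q^2"
    "good (A1$1$1) (A1$1$2) (A1$2$1) (A1$2$2) p q r" "good (A2$1$1) (A2$1$2) (A2$2$1) (A2$2$2) p q r"
    using core[OF h1(1) h2(1) h1(2) h2(2) dC] by blast
  show ?thesis
    using matrix_part[OF pqr(1,2) h1(1) pqr(3)] matrix_part[OF pqr(1,2) h2(1) pqr(4)] by blast
qed


end
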